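(* Let $C$ be an $A$-code of length $l>1$ with $L_{\mathrm{ind}}(C)=1$, and let $g^{(1)}=(g_{1,1},\ldots,g_{1,l})$ be the first element of the canonical basis of divisors of $C$ (so $g_{1,1}$ is a monic divisor of $f$). Let $h_{1,1}\in A$ be the image of the polynomial $f(x)/g_{1,1}(x)$. Let $C'\subseteq A^{l-1}$ be the code obtained from $C^{(2)}=\{c\in C: c_1=0\}$ by deleting the first coordinate, and let $H'=(h'_{ij})_{2\le i\le k,\,2\le j\le l}$ be any generator matrix of $C'^{\perp}$. For $2\le i\le k$ let $\alpha_i$ be the remainder, upon division by the polynomial $f/g_{1,1}$, of the polynomial $-\bigl(\sum_{j=2}^l h'_{ij}g_{1,j}\bigr)/g_{1,1}$ (entries regarded as polynomials of degree $<m$). Then the $k\times l$ matrix $$H=\begin{pmatrix} h_{1,1} & 0\ \cdots\ 0\\ \alpha_2 & \\ \vdots & H'\\ \alpha_k & \end{pmatrix}$$ is a generator matrix of $C^{\perp}$.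
   Context: Let $\mathbb{F}$ be a finite field, $f(x)\in\mathbb{F}[x]$ monic of degree $m$, and $A=\mathbb{F}[x]/\langle f(x)\rangle$, elements identified with polynomials of degree $<m$. An $A$-code of length $l$ is an $A$-submodule of $A^l$; a generator matrix of it is a matrix over $A$ whose rows generate it as an $A$-module. The dual is $C^\perp=\{a\in A^l:\sum_i a_ic_i=0\ \forall c\in C\}$. For $u\in A^l$, $L_{\mathrm{ind}}(u)$ is the smallest index of a nonzero entry ($\infty$ for $u=0$) and $L_{\mathrm{coef}}(u)$ is that entry. For nonzero $C$, $L_{\mathrm{ind}}(C)=\min_{u\in C}L_{\mathrm{ind}}(u)$; $L_{\mathrm{coef}}(C)$ is the monic polynomial $g$ of minimum degree such that some $c\in C$ has $L_{\mathrm{ind}}(c)=L_{\mathrm{ind}}(C)$, $L_{\mathrm{coef}}(c)=g$; such $c$ is a leading element. $C^{(1)}=C$, $C^{(n+1)}=\{c\in C^{(n)}:L_{\mathrm{ind}}(c)>L_{\mathrm{ind}}(C^{(n)})\}$ while $C^{(n)}\ne0$; with $k$ largest such that $C^{(k)}\neq0$, a tuple $(g^{(1)},\dots,g^{(k)})$ with $g^{(j)}$ a leading element of $C^{(j)}$ is a basis of divisors. If moreover, writing $g_{i,j_i}$ for the leading coefficient of $g^{(i)}$, one has $\deg g_{t,j_i}<\deg g_{i,j_i}$ for all $t<i$, the basis is the canonical basis of divisors (it exists and is unique for every nonzero $A$-code), and the matrix with rows $g^{(i)}$ is the canonical generator matrix (CGM). Leading coefficients of elements of a basis of divisors are monic divisors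 of $f$. *)

theory Defs
  imports "HOL-Computational_Algebra.Polynomial" "HOL-Library.Extended_Nat"
begin

text \<open>The ring A = F[x]/(f) is modelled by the polynomials p with p mod f = p
  (i.e. polynomials of degree < deg f); multiplication in A is (p * q) mod f.
  Vectors of length l over A are functions nat => 'a poly whose entries lie in A,
  indexed by 1..l and zero outside 1..l.\<close>

type_synonym 'a vec = "nat \<Rightarrow> 'a poly"

definition Aelem :: "'a::field poly \<Rightarrow> 'a poly \<Rightarrow> bool" where
  "Aelem f p \<longleftrightarrow> p mod f = p"

definition Avecs :: "'a::field poly \<Rightarrow> nat \<Rightarrow> 'a vec set" where
  "Avecs f l = {u. (\<forall>j. Aelem f (u j)) \<and> (\<forall>j. j \<notin> {1..l} \<longrightarrow> u j = 0)}"

definition is_code :: "'a::field poly \<Rightarrow> nat \<Rightarrow> 'a vec set \<Rightarrow> bool" where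
  "is_code f l C \<longleftrightarrow> C \<subseteq> Avecs f l \<and> (\<lambda>_. 0) \<in> C
     \<and> (\<forall>u\<in>C. \<forall>v\<in>C. (\<lambda>j. u j + v j) \<in> C)
     \<and> (\<forall>a. \<forall>u\<in>C. Aelem f a \<longrightarrow> (\<lambda>j. (a * u j) mod f) \<in> C)"

definition row_span :: "'a::field poly \<Rightarrow> nat set \<Rightarrow> (nat \<Rightarrow> 'a vec) \<Rightarrow> 'a vec set" where
  "row_span f I R = {(\<lambda>j. (\<Sum>i\<in>I. a i * R i j) mod f) | a. \<forall>i. Aelem f (a i)}"

definition gen_matrix :: "'a::field poly \<Rightarrow> nat \<Rightarrow> nat set \<Rightarrow> (nat \<Rightarrow> 'a vec) \<Rightarrow> 'a vec set \<Rightarrow> bool" where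
  "gen_matrix f l I R C \<longleftrightarrow> finite I \<and> (\<forall>i\<in>I. R i \<in> Avecs f l) \<and> row_span f I R = C"

definition dual :: "'a::field poly \<Rightarrow> nat \<Rightarrow> 'a vec set \<Rightarrow> 'a vec set" where
  "dual f l C = {a \<in> Avecs f l. \<forall>c\<in>C. (\<Sum>i=1..l. a i * c i) mod f = 0}"

definition Lind :: "'a::zero vec \<Rightarrow> enat" where
  "Lind u = (if u = (\<lambda>_. 0) then \<infinity> else enat (LEAST i. u i \<noteq> 0))"

definition Lcoef :: "'a::zero vec \<Rightarrow> 'a poly" where
  "Lcoef u = u (LEAST i. u i \<noteq> 0)"

definition Lind_code :: "'a::zero vec set \<Rightarrow> enat" where
  "Lind_code D = (INF u\<in>D. Lind u)"

definition nonzero_code :: "'a::zero vec set \<Rightarrow> bool" where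
  "nonzero_code D \<longleftrightarrow> (\<exists>c\<in>D. c \<noteq> (\<lambda>_. 0))"

definition leading_elem :: "'a::field vec set \<Rightarrow> 'a vec \<Rightarrow> bool" where
  "leading_elem D c \<longleftrightarrow> c \<in> D \<and> c \<noteq> (\<lambda>_. 0) \<and> Lind c = Lind_code D
     \<and> lead_coeff (Lcoef c) = 1
     \<and> (\<forall>c'\<in>D. c' \<noteq> (\<lambda>_. 0) \<and> Lind c' = Lind_code D \<and> lead_coeff (Lcoef c') = 1
            \<longrightarrow> degree (Lcoef c) \<le> degree (Lcoef c'))"

text \<open>subc C n is C^{(n+1)}.\<close>
primrec subc :: "'a::zero vec set \<Rightarrow> nat \<Rightarrow> 'a vec set" where
  "subc C 0 = C"
| "subc C (Suc n) = {c \<in> subc C n. Lind c > Lind_code (subc C n)}"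

definition code_seq :: "'a::zero vec set \<Rightarrow> nat \<Rightarrow> 'a vec set" where
  "code_seq C n = subc C (n - 1)"

definition basis_of_divisors :: "'a::field vec set \<Rightarrow> nat \<Rightarrow> (nat \<Rightarrow> 'a vec) \<Rightarrow> bool" where
  "basis_of_divisors C k g \<longleftrightarrow> k \<ge> 1 \<and> nonzero_code (code_seq C k)
     \<and> \<not> nonzero_code (code_seq C (Suc k))
     \<and> (\<forall>j\<in>{1..k}. leading_elem (code_seq C j) (g j))"

text \<open>Canonical basis of divisors; the degree of the zero polynomial is read as -infinity.\<close>
definition canonical_basis :: "'a::field vec set \<Rightarrow> nat \<Rightarrow> (nat \<Rightarrow> 'a vec) \<Rightarrow> bool" where
  "canonical_basis C k g \<longleftrightarrow> basis_of_divisors C k g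
     \<and> (\<forall>i\<in>{1..k}. \<forall>t\<in>{1..<i}.
          let ji = the_enat (Lind (g i)) in g t ji = 0 \<or> degree (g t ji) < degree (g i ji))"

definition del_first :: "'a::zero vec \<Rightarrow> 'a vec" where
  "del_first u = (\<lambda>j. if j = 0 then 0 else u (Suc j))"

end

theory Submission
  imports Defs
begin

lemma Aelem_mod: "Aelem f (p mod f)"
  by (simp add: Aelem_def)

lemma Aelem_eqI: "Aelem f x \<Longrightarrow> Aelem f y \<Longrightarrow> x mod f = y mod f \<Longrightarrow> x = y"
  by (simp add: Aelem_def)

lemma Aelem_deg: "degree p < degree f \<Longrightarrow> Aelem f (p::'a::field poly)"
  by (simp add: Aelem_def mod_poly_less)

lemma Aelem_deg2: "f \<noteq> 0 \<Longrightarrow> Aelem f p \<Longrightarrow> p \<noteq> 0 \<Longrightarrow> degree p < degree (f::'a::field poly)"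
  by (metis Aelem_def degree_mod_less')

lemma Aelem_zero: "Aelem f 0" by (simp add: Aelem_def)

lemma Lind_one:
  assumes a: "u 0 = 0" "u 1 \<noteq> 0"
  shows "Lind u = 1 \<and> Lcoef u = u 1"
proof -
  have L: "(LEAST i. u i \<noteq> 0) = 1"
  proof (rule Least_equality)
    show "u 1 \<noteq> 0" by fact
    fix y assume "u y \<noteq> 0"
    with a show "1 \<le> y" by (cases y) auto
  qed
  have "u \<noteq> (\<lambda>_. 0)" using a by auto
  then show ?thesis unfolding Lind_def Lcoef_def using L by (simp add: one_enat_def)
qed

lemma Lind_gt1:
  assumes a: "u 0 = 0" "u 1 = 0"
  shows "1 < Lind u"
proof (cases "u = (\<lambda>_. 0)")
  case True then show ?thesis by (simp add: Lind_def)
next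
  case False
  then have ex: "\<exists>i. u i \<noteq> 0" by auto
  have "u (LEAST i. u i \<noteq> 0) \<noteq> 0" using LeastI_ex[OF ex] .
  then have "(LEAST i. u i \<noteq> 0) \<ge> 2" using a
    by (metis One_nat_def Suc_1 le_less_linear less_2_cases)
  then show ?thesis using False by (simp add: Lind_def one_enat_def)
qed

lemma sum_mod_cong:
  "(\<And>i. i \<in> A \<Longrightarrow> F i mod f = G i mod f) \<Longrightarrow> (sum F A) mod f = (sum G A) mod (f::'a::field poly)"
  by (metis (mono_tags, lifting) mod_sum_eq sum.cong)

lemma mult_mod_cong: "a mod f = b mod f \<Longrightarrow> (h * a) mod f = (h * b) mod (f::'a::field poly)"
  by (metis mod_mult_right_eq)

lemma add_mod_cong: "a mod f = b mod f \<Longrightarrow> (h + a) mod f = (h + b) mod (f::'a::field poly)"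
  by (metis mod_add_right_eq)

theorem mainTheorem2:
  fixes f :: "'a::{field,finite} poly"
    and l k kC :: nat
    and C :: "'a vec set"
    and g :: "nat \<Rightarrow> 'a vec"
    and Hp :: "nat \<Rightarrow> 'a vec"
  assumes monic: "lead_coeff f = 1"
    and l_gt: "l > 1"
    and code: "is_code f l C"
    and lind: "Lind_code C = 1"
    and canon: "canonical_basis C kC g"
    and k_ge: "k \<ge> 1"
    and Hgen: "gen_matrix f (l - 1) {2..k} Hp (dual f (l - 1) (del_first ` code_seq C 2))"
  shows "gen_matrix f l {1..k}
     (\<lambda>i j. if i = 1 then (if j = 1 then (f div g 1 1) mod f else 0)
            else if j = 0 then 0
            else if j = 1 then
              (- ((\<Sum>jj=2..l. Hp i (jj - 1) * g 1 jj) div g 1 1)) mod (f div g 1 1)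
            else Hp i (j - 1))
     (dual f l C)"
proof -
  have Cs: "C \<subseteq> Avecs f l" and C0: "(\<lambda>_. 0) \<in> C"
    and Cadd: "\<And>u v. u\<in>C \<Longrightarrow> v\<in>C \<Longrightarrow> (\<lambda>j. u j + v j) \<in> C"
    and Csm: "\<And>a u. Aelem f a \<Longrightarrow> u \<in> C \<Longrightarrow> (\<lambda>j. (a * u j) mod f) \<in> C"
    using code unfolding is_code_def by auto
  have Av0: "\<And>u. u \<in> C \<Longrightarrow> u 0 = 0" using Cs by (auto simp: Avecs_def)
  have AvA: "\<And>u j. u \<in> C \<Longrightarrow> Aelem f (u j)" using Cs by (auto simp: Avecs_def)
  have bd: "basis_of_divisors C kC g" using canon by (simp add: canonical_basis_def)
  hence "kC \<ge> 1" by (simp add: basis_of_divisors_def)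
  hence "leading_elem (code_seq C 1) (g 1)" using bd unfolding basis_of_divisors_def by auto
  hence le: "leading_elem C (g 1)" by (simp add: code_seq_def)
  have g1C: "g 1 \<in> C" and g1L: "Lind (g 1) = 1" and g1m: "lead_coeff (Lcoef (g 1)) = 1"
    and g1min: "\<And>c'. c' \<in> C \<Longrightarrow> c' \<noteq> (\<lambda>_. 0) \<Longrightarrow> Lind c' = 1 \<Longrightarrow> lead_coeff (Lcoef c') = 1
       \<Longrightarrow> degree (Lcoef (g 1)) \<le> degree (Lcoef c')"
    using le lind unfolding leading_elem_def by auto
  define g11 where "g11 = g 1 1"
  have "g 1 1 \<noteq> 0"
  proof
    assume z: "g 1 1 = 0"
    have "1 < Lind (g 1)" by (rule Lind_gt1) (use Av0 g1C z in auto)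
    with g1L show False by simp
  qed
  then have Lc: "Lcoef (g 1) = g11" using Lind_one[of "g 1"] Av0 g1C g11_def by auto
  have g11m: "lead_coeff g11 = 1" using g1m Lc by simp
  have g11nz: "g11 \<noteq> 0" using g11m by auto
  have fnz: "f \<noteq> 0" using monic by auto
  have degf: "degree f > 0"
  proof (rule ccontr)
    assume "\<not> degree f > 0"
    then obtain a where "f = [:a:]" using degree0_coeffs by auto
    with monic have "f = 1" by (simp add: one_pCons)
    then have "g11 mod f = 0" by simp
    with AvA[OF g1C, of 1] g11nz show False by (simp add: Aelem_def g11_def)
  qed
  have g11deg: "degree g11 < degree f" using Aelem_deg2[OF fnz AvA[OF g1C, of 1]] g11nz unfolding g11_def by simp
  have minc: "\<And>c. c \<in> C \<Longrightarrow> degree (c 1) < degree g11 \<Longrightarrow> c 1 = 0"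
  proof (rule ccontr)
    fix c assume c: "c \<in> C" "degree (c 1) < degree g11" "c 1 \<noteq> 0"
    define u where "u = lead_coeff (c 1)"
    have unz: "u \<noteq> 0" using c u_def by simp
    define c' where "c' = (\<lambda>j. ([:1/u:] * c j) mod f)"
    have c'C: "c' \<in> C" unfolding c'_def by (rule Csm) (auto intro: Aelem_deg simp: degf c)
    have "degree (smult (1/u) (c 1)) < degree f" using c g11deg by simp
    then have c'1: "c' 1 = smult (1/u) (c 1)" unfolding c'_def by (simp add: mod_poly_less)
    then have c'1nz: "c' 1 \<noteq> 0" and c'1m: "lead_coeff (c' 1) = 1" using unz c u_def by auto
    have "Lind c' = 1 \<and> Lcoef c' = c' 1" using Lind_one[of c'] Av0[OF c'C] c'1nz by auto
    moreover have "c' \<noteq> (\<lambda>_. 0)" using c'1nz by auto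
    ultimately have "degree g11 \<le> degree (c' 1)" using g1min[OF c'C] c'1m Lc by auto
    with c'1 c unz show False by simp
  qed
  have dvdP: "\<And>c p. c \<in> C \<Longrightarrow> c 1 mod f = p mod f \<Longrightarrow> g11 dvd p"
  proof -
    fix c p assume c: "c \<in> C" and cp: "c 1 mod f = p mod f"
    define q where "q = p div g11"
    define w where "w = (\<lambda>j. c j + ((- q) mod f * g 1 j) mod f)"
    have wC: "w \<in> C" unfolding w_def by (rule Cadd[OF c Csm[OF Aelem_mod g1C]])
    have "w 1 mod f = (c 1 + (- q) * g11) mod f" unfolding w_def g11_def by (simp add: mod_simps)
    also have "\<dots> = (p - q * g11) mod f" using cp by (metis diff_conv_add_uminus minus_mult_left mod_add_left_eq)
    also have "\<dots> = (p mod g11) mod f" unfolding q_def by (simp add: minus_div_mult_eq_mod)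
    finally have w1: "w 1 mod f = (p mod g11) mod f" .
    have A: "Aelem f (p mod g11)"
    proof (cases "p mod g11 = 0")
      case True then show ?thesis by (simp add: Aelem_zero)
    next
      case False then show ?thesis using degree_mod_less'[OF g11nz False] g11deg
        by (intro Aelem_deg) simp
    qed
    have "w 1 = p mod g11" using Aelem_eqI[OF AvA[OF wC] A w1] .
    moreover have "p mod g11 = 0"
    proof (rule ccontr)
      assume ne: "p mod g11 \<noteq> 0"
      then have "degree (w 1) < degree g11" using degree_mod_less'[OF g11nz ne] calculation by simp
      then have "w 1 = 0" using minc[OF wC] by simp
      with calculation ne show False by simp
    qed
    then show "g11 dvd p" by auto
  qed
  have g11f: "g11 dvd f" using dvdP[OF C0, of f] by simp
  have dvd_first: "\<And>c. c\<in>C \<Longrightarrow> g11 dvd c 1" using dvdP by blast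
  define q0 where "q0 = f div g11"
  have fq0: "f = q0 * g11" using g11f unfolding q0_def by simp
  have q0nz: "q0 \<noteq> 0" using fq0 fnz by auto
  have C2: "code_seq C 2 = {c \<in> C. c 1 = 0}"
  proof -
    have "code_seq C 2 = {c\<in>C. 1 < Lind c}" by (simp add: code_seq_def lind numeral_2_eq_2)
    also have "\<dots> = {c \<in> C. c 1 = 0}"
    proof (rule Collect_cong)
      fix c
      show "(c \<in> C \<and> 1 < Lind c) = (c \<in> C \<and> c 1 = 0)"
      proof (cases "c \<in> C")
        case True
        show ?thesis
        proof (cases "c 1 = 0")
          case z: True
          then show ?thesis using Lind_gt1[OF Av0[OF True] z] True by simp
        next
          case False
          then show ?thesis using Lind_one[OF Av0[OF True] False] by simp
        qed
      qed simp
    qed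
    finally show ?thesis .
  qed
  have Hfin: "finite {2..k}" and HpAv: "\<And>i. i \<in> {2..k} \<Longrightarrow> Hp i \<in> Avecs f (l - 1)"
    and Hspan: "row_span f {2..k} Hp = dual f (l - 1) (del_first ` code_seq C 2)"
    using Hgen unfolding gen_matrix_def by auto
  have HpA: "\<And>i j. i \<in> {2..k} \<Longrightarrow> Aelem f (Hp i j)" using HpAv by (auto simp: Avecs_def)
  have HpZ: "\<And>i j. i \<in> {2..k} \<Longrightarrow> j \<notin> {1..l-1} \<Longrightarrow> Hp i j = 0" using HpAv by (auto simp: Avecs_def)
  have A1: "Aelem f 1" using degf by (intro Aelem_deg) simp
  have HpD: "\<And>i. i \<in> {2..k} \<Longrightarrow> Hp i \<in> dual f (l-1) (del_first ` code_seq C 2)"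
  proof -
    fix i assume i: "i \<in> {2..k}"
    define a :: "nat \<Rightarrow> 'a poly" where "a = (\<lambda>i'. if i' = i then 1 else 0)"
    have "Hp i = (\<lambda>j. (\<Sum>i'\<in>{2..k}. a i' * Hp i' j) mod f)"
    proof
      fix j
      have "(\<Sum>i'\<in>{2..k}. a i' * Hp i' j) = (\<Sum>i'\<in>{2..k}. if i' = i then Hp i j else 0)"
        by (rule sum.cong) (auto simp: a_def)
      also have "\<dots> = Hp i j" using i Hfin by simp
      finally have "(\<Sum>i'\<in>{2..k}. a i' * Hp i' j) = Hp i j" .
      then show "Hp i j = (\<Sum>i'\<in>{2..k}. a i' * Hp i' j) mod f"
        using HpA[OF i, of j] by (simp add: Aelem_def)
    qed
    moreover have "\<forall>i. Aelem f (a i)" unfolding a_def using A1 Aelem_zero by auto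
    ultimately have "Hp i \<in> row_span f {2..k} Hp" unfolding row_span_def by blast
    then show "Hp i \<in> dual f (l-1) (del_first ` code_seq C 2)" using Hspan by simp
  qed
  have reidx: "\<And>F::nat \<Rightarrow> 'a poly. (\<Sum>j=1..l-1. F (Suc j)) = (\<Sum>jj=2..l. F jj)"
  proof -
    fix F :: "nat \<Rightarrow> 'a poly"
    have "(\<Sum>jj=Suc 1..Suc (l-1). F jj) = (\<Sum>j=1..l-1. F (Suc j))" by (rule sum.shift_bounds_cl_Suc_ivl)
    then show "(\<Sum>j=1..l-1. F (Suc j)) = (\<Sum>jj=2..l. F jj)" using l_gt by (simp add: numeral_2_eq_2)
  qed
  have HpOrth: "\<And>i c. i\<in>{2..k} \<Longrightarrow> c \<in> C \<Longrightarrow> c 1 = 0 \<Longrightarrow> (\<Sum>jj=2..l. Hp i (jj-1) * c jj) mod f = 0"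
  proof -
    fix i c assume i: "i\<in>{2..k}" and c: "c \<in> C" "c 1 = 0"
    have "del_first c \<in> del_first ` code_seq C 2" using c C2 by auto
    then have "(\<Sum>j=1..l-1. Hp i j * del_first c j) mod f = 0" using HpD[OF i] unfolding dual_def by auto
    moreover have "(\<Sum>j=1..l-1. Hp i j * del_first c j) = (\<Sum>j=1..l-1. Hp i (Suc j - 1) * c (Suc j))"
      by (rule sum.cong) (auto simp: del_first_def)
    ultimately show "(\<Sum>jj=2..l. Hp i (jj-1) * c jj) mod f = 0" using reidx[of "\<lambda>jj. Hp i (jj-1) * c jj"] by simp
  qed
  define S where "S = (\<lambda>i. \<Sum>jj=2..l. Hp i (jj - 1) * g 1 jj)"
  have SD: "\<And>i. i \<in> {2..k} \<Longrightarrow> g11 dvd S i"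
  proof -
    fix i assume i: "i \<in> {2..k}"
    define v where "v = (\<lambda>j. (q0 mod f * g 1 j) mod f)"
    have vC: "v \<in> C" unfolding v_def by (rule Csm[OF Aelem_mod g1C])
    have "v 1 = (q0 * g11) mod f" unfolding v_def g11_def by (simp add: mod_simps)
    then have v1: "v 1 = 0" using fq0 by simp
    have "(\<Sum>jj=2..l. Hp i (jj-1) * v jj) mod f = (\<Sum>jj=2..l. q0 * (Hp i (jj-1) * g 1 jj)) mod f"
      by (rule sum_mod_cong) (simp add: v_def mod_simps algebra_simps)
    also have "\<dots> = (q0 * S i) mod f" unfolding S_def by (simp add: sum_distrib_left)
    finally have "(q0 * S i) mod f = 0" using HpOrth[OF i vC v1] by simp
    then have "q0 * g11 dvd q0 * S i" using fq0 by (simp add: mod_eq_0_iff_dvd)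
    then show "g11 dvd S i" using q0nz by simp
  qed
  define al where "al = (\<lambda>i. (- (S i div g11)) mod q0)"
  have alK: "\<And>i. i\<in>{2..k} \<Longrightarrow> (al i * g11 + S i) mod f = 0"
  proof -
    fix i assume i: "i \<in> {2..k}"
    define s where "s = S i div g11"
    have Ss: "S i = s * g11" using SD[OF i] unfolding s_def by simp
    define t where "t = (- s) div q0"
    have aleq: "al i = - s - t * q0" unfolding al_def s_def t_def by (rule minus_div_mult_eq_mod[symmetric])
    have "al i * g11 + S i = (- s - t * q0) * g11 + s * g11" by (simp only: aleq Ss)
    also have "\<dots> = - t * f" unfolding fq0 by (simp add: algebra_simps)
    finally have "al i * g11 + S i = - t * f" .
    then show "(al i * g11 + S i) mod f = 0" by simp
  qed
  have aldeg: "\<And>i. Aelem f (al i)"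
  proof -
    fix i
    show "Aelem f (al i)"
    proof (cases "al i = 0")
      case True then show ?thesis by (simp add: Aelem_zero)
    next
      case False
      then have "degree (al i) < degree q0" unfolding al_def using degree_mod_less'[OF q0nz] by auto
      moreover have "degree q0 \<le> degree f" using fq0 q0nz g11nz by (simp add: degree_mult_eq)
      ultimately show ?thesis by (intro Aelem_deg) simp
    qed
  qed
  define Hm where "Hm = (\<lambda>i j. if i = 1 then (if j = 1 then (f div g 1 1) mod f else 0)
            else if j = 0 then 0
            else if j = 1 then
              (- ((\<Sum>jj=2..l. Hp i (jj - 1) * g 1 jj) div g 1 1)) mod (f div g 1 1)
            else Hp i (j - 1))"
  have H1: "\<And>j. Hm 1 j = (if j = 1 then q0 mod f else 0)" by (simp add: Hm_def q0_def g11_def)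
  have Hi0: "\<And>i. i \<noteq> 1 \<Longrightarrow> Hm i 0 = 0" by (simp add: Hm_def)
  have Hi1: "\<And>i. i \<noteq> 1 \<Longrightarrow> Hm i 1 = al i" by (simp add: Hm_def al_def S_def q0_def g11_def)
  have Hij: "\<And>i j. i \<noteq> 1 \<Longrightarrow> j \<ge> 2 \<Longrightarrow> Hm i j = Hp i (j-1)" by (simp add: Hm_def)
  have HmZ: "\<And>i j. i \<in> {1..k} \<Longrightarrow> j \<notin> {1..l} \<Longrightarrow> Hm i j = 0"
  proof -
    fix i j assume i: "i \<in> {1..k}" and j: "j \<notin> {1..l}"
    show "Hm i j = 0"
    proof (cases "i = 1")
      case True then show ?thesis using H1 j l_gt by auto
    next
      case False
      show ?thesis
      proof (cases "j = 0")
        case True then show ?thesis using Hi0 False by simp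
      next
        case j0: False
        then have "j > l" using j by auto
        then have "j \<ge> 2" "j - 1 \<notin> {1..l-1}" using l_gt by auto
        then show ?thesis using Hij[OF False] HpZ[of i "j-1"] i False by auto
      qed
    qed
  qed
  have HmA: "\<And>i j. i \<in> {1..k} \<Longrightarrow> Aelem f (Hm i j)"
  proof -
    fix i j assume i: "i \<in> {1..k}"
    show "Aelem f (Hm i j)"
    proof (cases "i = 1")
      case True then show ?thesis using H1 by (simp add: Aelem_mod Aelem_zero)
    next
      case False
      then have i2: "i \<in> {2..k}" using i by auto
      consider "j = 0" | "j = 1" | "j \<ge> 2" by linarith
      then show ?thesis
        using Hi0[OF False] Hi1[OF False] Hij[OF False] Aelem_zero aldeg HpA[OF i2] by cases auto
    qed
  qed
  have HmAv: "\<And>i. i\<in>{1..k} \<Longrightarrow> Hm i \<in> Avecs f l"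
    unfolding Avecs_def using HmA HmZ by blast
  have split1: "\<And>F::nat \<Rightarrow> 'a poly. (\<Sum>j=1..l. F j) = F 1 + (\<Sum>j=2..l. F j)"
    using l_gt by (simp add: sum.atLeast_Suc_atMost numeral_2_eq_2)
  have splitk: "\<And>F::nat \<Rightarrow> 'a poly. (\<Sum>i=1..k. F i) = F 1 + (\<Sum>i=2..k. F i)"
    using k_ge by (simp add: sum.atLeast_Suc_atMost numeral_2_eq_2)
  have RowOrth: "\<And>i c. i\<in>{1..k} \<Longrightarrow> c\<in>C \<Longrightarrow> (\<Sum>j=1..l. Hm i j * c j) mod f = 0"
  proof -
    fix i c assume i: "i\<in>{1..k}" and c: "c\<in>C"
    obtain t where ct: "c 1 = g11 * t" using dvd_first[OF c] by blast
    show "(\<Sum>j=1..l. Hm i j * c j) mod f = 0"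
    proof (cases "i = 1")
      case True
      have "(\<Sum>j=2..l. Hm i j * c j) = 0" using True H1 by simp
      then have "(\<Sum>j=1..l. Hm i j * c j) = q0 mod f * c 1" using split1[of "\<lambda>j. Hm i j * c j"] True H1 by simp
      then have "(\<Sum>j=1..l. Hm i j * c j) mod f = (q0 * c 1) mod f" by (simp add: mod_simps)
      also have "\<dots> = (f * t) mod f" using ct fq0 by (simp add: algebra_simps)
      finally show ?thesis by simp
    next
      case False
      then have i2: "i \<in> {2..k}" using i by auto
      define X where "X = (\<Sum>jj=2..l. Hp i (jj-1) * c jj)"
      have "(\<Sum>j=2..l. Hm i j * c j) = X" unfolding X_def by (rule sum.cong) (auto simp: Hij[OF False])
      then have sum1: "(\<Sum>j=1..l. Hm i j * c j) = al i * c 1 + X"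
        using split1[of "\<lambda>j. Hm i j * c j"] Hi1[OF False] by simp
      define w where "w = (\<lambda>j. c j + ((- t) mod f * g 1 j) mod f)"
      have wC: "w \<in> C" unfolding w_def by (rule Cadd[OF c Csm[OF Aelem_mod g1C]])
      have wm: "\<And>j. w j mod f = (c j - t * g 1 j) mod f" unfolding w_def by (simp add: mod_simps)
      have "w 1 mod f = 0 mod f" using wm[of 1] ct by (simp add: g11_def algebra_simps)
      then have w1: "w 1 = 0" using Aelem_eqI[OF AvA[OF wC] Aelem_zero] by simp
      have "(\<Sum>jj=2..l. Hp i (jj-1) * w jj) mod f = (\<Sum>jj=2..l. Hp i (jj-1) * c jj - t * (Hp i (jj-1) * g 1 jj)) mod f"
      proof (rule sum_mod_cong)
        fix jj
        have "(Hp i (jj-1) * w jj) mod f = (Hp i (jj-1) * (c jj - t * g 1 jj)) mod f" by (rule mult_mod_cong[OF wm])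
        then show "(Hp i (jj-1) * w jj) mod f = (Hp i (jj-1) * c jj - t * (Hp i (jj-1) * g 1 jj)) mod f"
          by (simp add: algebra_simps)
      qed
      also have "(\<Sum>jj=2..l. Hp i (jj-1) * c jj - t * (Hp i (jj-1) * g 1 jj)) = X - t * S i"
        unfolding X_def S_def by (simp add: sum_subtractf sum_distrib_left)
      finally have e: "(X - t * S i) mod f = 0" using HpOrth[OF i2 wC w1] by simp
      have "al i * c 1 + X = t * (al i * g11 + S i) + (X - t * S i)" using ct by (simp add: algebra_simps)
      moreover have "(t * (al i * g11 + S i)) mod f = 0" using alK[OF i2] by (metis mod_mult_right_eq mult_zero_right mod_0)
      ultimately have "(al i * c 1 + X) mod f = 0" using e by (metis mod_add_eq add_0 mod_0)
      then show ?thesis using sum1 by simp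
    qed
  qed
  have main: "gen_matrix f l {1..k} Hm (dual f l C)"
    unfolding gen_matrix_def
  proof (intro conjI)
    show "finite {1..k}" by simp
    show "\<forall>i\<in>{1..k}. Hm i \<in> Avecs f l" using HmAv by blast
    show "row_span f {1..k} Hm = dual f l C"
    proof
      show "row_span f {1..k} Hm \<subseteq> dual f l C"
      proof
        fix v assume "v \<in> row_span f {1..k} Hm"
        then obtain a where a: "\<forall>i. Aelem f (a i)" and v: "v = (\<lambda>j. (\<Sum>i\<in>{1..k}. a i * Hm i j) mod f)"
          unfolding row_span_def by blast
        have vAv: "v \<in> Avecs f l" unfolding Avecs_def v
          using HmZ by (auto simp: Aelem_mod)
        have "\<forall>c\<in>C. (\<Sum>j=1..l. v j * c j) mod f = 0"
        proof
          fix c assume c: "c \<in> C"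
          have "(\<Sum>j=1..l. v j * c j) mod f = (\<Sum>j=1..l. (\<Sum>i\<in>{1..k}. a i * Hm i j) * c j) mod f"
            by (rule sum_mod_cong) (simp add: v mod_simps)
          also have "(\<Sum>j=1..l. (\<Sum>i\<in>{1..k}. a i * Hm i j) * c j) = (\<Sum>i\<in>{1..k}. a i * (\<Sum>j=1..l. Hm i j * c j))"
            by (simp add: sum_distrib_left sum_distrib_right mult.assoc) (rule sum.swap)
          also have "(\<Sum>i\<in>{1..k}. a i * (\<Sum>j=1..l. Hm i j * c j)) mod f = (\<Sum>i\<in>{1..k}. a i * 0) mod f"
            by (rule sum_mod_cong) (rule mult_mod_cong, use RowOrth c in simp)
          finally show "(\<Sum>j=1..l. v j * c j) mod f = 0" by simp
        qed
        with vAv show "v \<in> dual f l C" unfolding dual_def by blast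
      qed
    next
      show "dual f l C \<subseteq> row_span f {1..k} Hm"
      proof
        fix a assume aD: "a \<in> dual f l C"
        then have aAv: "a \<in> Avecs f l" and aO: "\<And>c. c \<in> C \<Longrightarrow> (\<Sum>j=1..l. a j * c j) mod f = 0"
          unfolding dual_def by auto
        have aA: "\<And>j. Aelem f (a j)" and aZ: "\<And>j. j \<notin> {1..l} \<Longrightarrow> a j = 0"
          using aAv unfolding Avecs_def by auto
        define a' where "a' = del_first a"
        have a'j: "\<And>j. j \<ge> 2 \<Longrightarrow> a' (j - 1) = a j" unfolding a'_def del_first_def by auto
        have "a' \<in> dual f (l-1) (del_first ` code_seq C 2)"
          unfolding dual_def
        proof (intro CollectI conjI ballI)
          show "a' \<in> Avecs f (l-1)" unfolding Avecs_def a'_def del_first_def using aA aZ Aelem_zero by auto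
          fix d assume "d \<in> del_first ` code_seq C 2"
          then obtain c where c: "c \<in> C" "c 1 = 0" and d: "d = del_first c" using C2 by auto
          have "(\<Sum>j=1..l-1. a' j * d j) = (\<Sum>j=1..l-1. a (Suc j) * c (Suc j))"
            by (rule sum.cong) (auto simp: a'_def d del_first_def)
          also have "\<dots> = (\<Sum>jj=2..l. a jj * c jj)" by (rule reidx)
          also have "\<dots> = (\<Sum>jj=1..l. a jj * c jj)" using split1[of "\<lambda>jj. a jj * c jj"] c by simp
          finally show "(\<Sum>j=1..l-1. a' j * d j) mod f = 0" using aO[OF c(1)] by simp
        qed
        then have "a' \<in> row_span f {2..k} Hp" using Hspan by simp
        then obtain b where bA: "\<forall>i. Aelem f (b i)" and a'b: "a' = (\<lambda>j. (\<Sum>i\<in>{2..k}. b i * Hp i j) mod f)"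
          unfolding row_span_def by blast
        have ajb: "\<And>j. j \<ge> 2 \<Longrightarrow> a j = (\<Sum>i\<in>{2..k}. b i * Hp i (j-1)) mod f"
          using a'j a'b by metis
        define beta where "beta = a 1 - (\<Sum>i\<in>{2..k}. b i * al i)"
        have "(\<Sum>jj=2..l. a jj * g 1 jj) mod f = (\<Sum>jj=2..l. (\<Sum>i\<in>{2..k}. b i * Hp i (jj-1)) * g 1 jj) mod f"
          by (rule sum_mod_cong) (simp add: ajb mod_simps)
        also have "(\<Sum>jj=2..l. (\<Sum>i\<in>{2..k}. b i * Hp i (jj-1)) * g 1 jj) = (\<Sum>i\<in>{2..k}. b i * S i)"
          unfolding S_def by (simp add: sum_distrib_left sum_distrib_right mult.assoc) (rule sum.swap)
        also have "(\<Sum>i\<in>{2..k}. b i * S i) mod f = (\<Sum>i\<in>{2..k}. - (b i * al i * g11)) mod f"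
        proof (rule sum_mod_cong)
          fix i assume i: "i \<in> {2..k}"
          have "f dvd (al i * g11 + S i)" using alK[OF i] by (simp add: mod_eq_0_iff_dvd)
          then have "f dvd b i * (al i * g11 + S i)" by simp
          moreover have "b i * S i - (- (b i * al i * g11)) = b i * (al i * g11 + S i)"
            by (simp add: algebra_simps)
          ultimately show "(b i * S i) mod f = (- (b i * al i * g11)) mod f"
            by (metis mod_eq_dvd_iff)
        qed
        also have "(\<Sum>i\<in>{2..k}. - (b i * al i * g11)) = - (\<Sum>i\<in>{2..k}. b i * al i) * g11"
          by (simp add: sum_negf sum_distrib_right)
        finally have e1: "(\<Sum>jj=2..l. a jj * g 1 jj) mod f = (- (\<Sum>i\<in>{2..k}. b i * al i) * g11) mod f" .
        have "(a 1 * g11 + (\<Sum>jj=2..l. a jj * g 1 jj)) mod f = 0"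
          using aO[OF g1C] split1[of "\<lambda>j. a j * g 1 j"] by (simp add: g11_def)
        then have "(a 1 * g11 + (- (\<Sum>i\<in>{2..k}. b i * al i) * g11)) mod f = 0"
          using add_mod_cong[OF e1, of "a 1 * g11"] by simp
        then have "f dvd beta * g11" unfolding beta_def by (simp add: mod_eq_0_iff_dvd algebra_simps)
        then have "q0 dvd beta" using fq0 g11nz by simp
        then obtain dl where bdl: "beta = q0 * dl" by blast
        define cf where "cf = (\<lambda>i. if i = 1 then dl mod f else b i)"
        have cfA: "\<forall>i. Aelem f (cf i)" using bA by (simp add: cf_def Aelem_mod)
        have "a = (\<lambda>j. (\<Sum>i\<in>{1..k}. cf i * Hm i j) mod f)"
        proof
          fix j
          have sb: "(\<Sum>i\<in>{2..k}. cf i * Hm i j) = (\<Sum>i\<in>{2..k}. b i * Hm i j)"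
            by (rule sum.cong) (auto simp: cf_def)
          have sp: "(\<Sum>i\<in>{1..k}. cf i * Hm i j) = dl mod f * Hm 1 j + (\<Sum>i\<in>{2..k}. b i * Hm i j)"
            using splitk[of "\<lambda>i. cf i * Hm i j"] sb by (simp add: cf_def)
          consider "j = 0" | "j = 1" | "j \<ge> 2" by linarith
          then show "a j = (\<Sum>i\<in>{1..k}. cf i * Hm i j) mod f"
          proof cases
            case 1
            have "(\<Sum>i\<in>{2..k}. b i * Hm i j) = 0" using 1 Hi0 by simp
            then show ?thesis using sp 1 H1 aZ by simp
          next
            case 2
            have "(\<Sum>i\<in>{2..k}. b i * Hm i j) = (\<Sum>i\<in>{2..k}. b i * al i)"
              using 2 Hi1 by (intro sum.cong) auto
            then have "(\<Sum>i\<in>{1..k}. cf i * Hm i j) mod f = (dl mod f * (q0 mod f) + (\<Sum>i\<in>{2..k}. b i * al i)) mod f"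
              using sp 2 H1 by simp
            also have "\<dots> = (beta + (\<Sum>i\<in>{2..k}. b i * al i)) mod f"
            proof -
              have m: "(dl mod f * (q0 mod f)) mod f = beta mod f" using bdl by (simp add: mod_mult_eq mult.commute)
              show ?thesis by (metis m mod_add_left_eq)
            qed
            also have "\<dots> = a 1" unfolding beta_def using aA[of 1] by (simp add: Aelem_def)
            finally show ?thesis using 2 by simp
          next
            case 3
            have "(\<Sum>i\<in>{2..k}. b i * Hm i j) = (\<Sum>i\<in>{2..k}. b i * Hp i (j-1))"
              using 3 Hij by (intro sum.cong) auto
            then show ?thesis using sp 3 H1 ajb[OF 3] by simp
          qed
        qed
        then show "a \<in> row_span f {1..k} Hm" unfolding row_span_def using cfA by blast
      qed
    qed
  qed
  show ?thesis using main unfolding Hm_def by assumption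
qed

end
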